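(* The proof system consisting of Axiom (A) and Rules (R1)–(R6) is sound and complete for sentences: for every finite set $\Gamma$ of sentences and every sentence $\gamma$, $\Gamma\vdash\gamma$ if and only if $\Gamma\models\gamma$.
   Context: Setting (real-valued logic). Fix a finite set of atomic propositions, a finite set of binary connectives and a finite set of unary connectives. Each binary connective $\alpha$ comes with an arbitrary function $f_\alpha:[0,1]^2\to[0,1]$ and each unary connective $\rho$ with an arbitrary function $f_\rho:[0,1]\to[0,1]$. Formulas are built recursively: atomic propositions are formulas; if $\sigma_1,\sigma_2$ are formulas then so are $\sigma_1\,\alpha\,\sigma_2$ and $\rho\sigma_1$. The subformulas of $\sigma_1\,\alpha\,\sigma_2$ are $\sigma_1,\sigma_2$; the subformula of $\rho\sigma$ is $\sigma$. A model $M$ assigns a value in $[0,1]$ to each atomic proposition; values of compound formulas are computed recursively via $f_\alpha,f_\rho$. A sentence is $(\sigma_1,\ldots,\sigma_k,S)$ with $\sigma_1,\ldots,\sigma_k$ pairwise distinct formulas and $S\subseteq[0,1]^k$; $M\models(\sigma_1,\ldots,\sigma_k,S)$ iff $(s_1,\ldots,s_k)\in S$ where $s_i$ is the value of $\sigma_i$ in $M$. $\Gamma\models\gamma$ means every model of all sentences in $\Gamma$ is a model of $\gamma$. $\Gamma\vdash\gamma$ means $\gamma$ is derivable from $\Gamma$ by finitely many applications of the following axiom and rules. (A) For every formula $\sigma$: $(\sigma,[0,1])$. (R1) For a permutation $\pi$ of $\{1,\ldots,k\}$: from $(\sigma_1,\ldots,\sigma_k,S)$ infer $(\sigma_{\pi(1)},\ldots,\sigma_{\pi(k)},S')$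 with $S'=\{(s_{\pi(1)},\ldots,s_{\pi(k)}):(s_1,\ldots,s_k)\in S\}$. (R2) From $(\sigma_1,\ldots,\sigma_k,S)$ infer $(\sigma_1,\ldots,\sigma_k,\sigma_{k+1},\ldots,\sigma_m,S\times[0,1]^{m-k})$ (for formulas $\sigma_{k+1},\ldots,\sigma_m$ making all components distinct). (R3) From $(\sigma_1,\ldots,\sigma_k,S_1)$ and $(\sigma_1,\ldots,\sigma_k,S_2)$ infer $(\sigma_1,\ldots,\sigma_k,S_1\cap S_2)$. (R4) For $0<r<k$: from $(\sigma_1,\ldots,\sigma_k,S)$ infer $(\sigma_1,\ldots,\sigma_{k-r},S')$ with $S'=\{(s_1,\ldots,s_{k-r}):(s_1,\ldots,s_k)\in S\}$. (R5) From $(\sigma_1,\ldots,\sigma_k,S)$ infer $(\sigma_1,\ldots,\sigma_k,S')$ whenever $S\subseteq S'\subseteq[0,1]^k$. (R6) From $(\sigma_1,\ldots,\sigma_k,S)$ infer $(\sigma_1,\ldots,\sigma_k,S')$, where $S'$ is the set of $(s_1,\ldots,s_k)\in S$ such that (a) $f_\alpha(s_i,s_j)=s_m$ whenever $\sigma_m$ is $\sigma_i\,\alpha\,\sigma_j$ for a binary connective $\alpha$, and (b) $f_\rho(s_i)=s_j$ whenever $\sigma_j$ is $\rho\sigma_i$ for a unary connective $\rho$. *)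

theory Defs
  imports Complex_Main
begin

datatype ('a, 'b, 'u) form =
    Atom 'a
  | Bin "('a, 'b, 'u) form" 'b "('a, 'b, 'u) form"
  | UnOp 'u "('a, 'b, 'u) form"

text \<open>A sentence (sigma_1,...,sigma_k,S): the list of formulas and a set of
  real tuples, tuples being represented as lists of length k.\<close>
type_synonym ('a, 'b, 'u) sentence = "('a, 'b, 'u) form list \<times> real list set"

definition unit_cube :: "nat \<Rightarrow> real list set" where
  "unit_cube k = {s. length s = k \<and> set s \<subseteq> {0..1}}"

definition wf_sentence :: "('a, 'b, 'u) sentence \<Rightarrow> bool" where
  "wf_sentence g \<longleftrightarrow> fst g \<noteq> [] \<and> distinct (fst g) \<and> snd g \<subseteq> unit_cube (length (fst g))"

fun eval :: "('b \<Rightarrow> real \<Rightarrow> real \<Rightarrow> real) \<Rightarrow> ('u \<Rightarrow> real \<Rightarrow> real) \<Rightarrow> ('a \<Rightarrow> real)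
             \<Rightarrow> ('a, 'b, 'u) form \<Rightarrow> real" where
  "eval fb fu M (Atom p) = M p"
| "eval fb fu M (Bin s1 b s2) = fb b (eval fb fu M s1) (eval fb fu M s2)"
| "eval fb fu M (UnOp u s) = fu u (eval fb fu M s)"

definition is_model :: "('a \<Rightarrow> real) \<Rightarrow> bool" where
  "is_model M \<longleftrightarrow> (\<forall>p. M p \<in> {0..1})"

definition sat :: "('b \<Rightarrow> real \<Rightarrow> real \<Rightarrow> real) \<Rightarrow> ('u \<Rightarrow> real \<Rightarrow> real) \<Rightarrow> ('a \<Rightarrow> real)
                   \<Rightarrow> ('a, 'b, 'u) sentence \<Rightarrow> bool" where
  "sat fb fu M g \<longleftrightarrow> map (eval fb fu M) (fst g) \<in> snd g"

definition entails :: "('b \<Rightarrow> real \<Rightarrow> real \<Rightarrow> real) \<Rightarrow> ('u \<Rightarrow> real \<Rightarrow> real)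
                       \<Rightarrow> ('a, 'b, 'u) sentence set \<Rightarrow> ('a, 'b, 'u) sentence \<Rightarrow> bool" where
  "entails fb fu \<Gamma> g \<longleftrightarrow>
     (\<forall>M. is_model M \<longrightarrow> (\<forall>h\<in>\<Gamma>. sat fb fu M h) \<longrightarrow> sat fb fu M g)"

definition r6_filter :: "('b \<Rightarrow> real \<Rightarrow> real \<Rightarrow> real) \<Rightarrow> ('u \<Rightarrow> real \<Rightarrow> real)
                         \<Rightarrow> ('a, 'b, 'u) form list \<Rightarrow> real list set \<Rightarrow> real list set" where
  "r6_filter fb fu fs S = {s \<in> S.
      (\<forall>i<length fs. \<forall>j<length fs. \<forall>m<length fs. \<forall>b.
          fs ! m = Bin (fs ! i) b (fs ! j) \<longrightarrow> fb b (s ! i) (s ! j) = s ! m) \<and>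
      (\<forall>i<length fs. \<forall>j<length fs. \<forall>u.
          fs ! j = UnOp u (fs ! i) \<longrightarrow> fu u (s ! i) = s ! j)}"

inductive derivable :: "('b \<Rightarrow> real \<Rightarrow> real \<Rightarrow> real) \<Rightarrow> ('u \<Rightarrow> real \<Rightarrow> real)
                        \<Rightarrow> ('a, 'b, 'u) sentence set \<Rightarrow> ('a, 'b, 'u) sentence \<Rightarrow> bool"
  for fb fu \<Gamma> where
  hyp: "g \<in> \<Gamma> \<Longrightarrow> derivable fb fu \<Gamma> g"
| ax: "derivable fb fu \<Gamma> ([\<sigma>], unit_cube 1)"
| r1: "derivable fb fu \<Gamma> (fs, S) \<Longrightarrow> bij_betw \<pi> {..<length fs} {..<length fs} \<Longrightarrow>
       derivable fb fu \<Gamma> (map (\<lambda>i. fs ! \<pi> i) [0..<length fs],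
                             (\<lambda>s. map (\<lambda>i. s ! \<pi> i) [0..<length fs]) ` S)"
| r2: "derivable fb fu \<Gamma> (fs, S) \<Longrightarrow> distinct (fs @ gs) \<Longrightarrow>
       derivable fb fu \<Gamma> (fs @ gs, {s @ t | s t. s \<in> S \<and> t \<in> unit_cube (length gs)})"
| r3: "derivable fb fu \<Gamma> (fs, S1) \<Longrightarrow> derivable fb fu \<Gamma> (fs, S2) \<Longrightarrow>
       derivable fb fu \<Gamma> (fs, S1 \<inter> S2)"
| r4: "derivable fb fu \<Gamma> (fs, S) \<Longrightarrow> 0 < r \<Longrightarrow> r < length fs \<Longrightarrow>
       derivable fb fu \<Gamma> (take (length fs - r) fs, take (length fs - r) ` S)"
| r5: "derivable fb fu \<Gamma> (fs, S) \<Longrightarrow> S \<subseteq> S' \<Longrightarrow> S' \<subseteq> unit_cube (length fs) \<Longrightarrow>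
       derivable fb fu \<Gamma> (fs, S')"
| r6: "derivable fb fu \<Gamma> (fs, S) \<Longrightarrow> derivable fb fu \<Gamma> (fs, r6_filter fb fu fs S)"

end

theory Submission imports Defs begin

definition vset :: "('f \<Rightarrow> real) set \<Rightarrow> 'f list \<Rightarrow> real list set" where
  "vset P fs = {map v fs | v. v \<in> P}"

lemma map_of_zip_map:
  assumes "distinct fs" "length s = length fs"
  shows "map (\<lambda>x. the (map_of (zip fs s) x)) fs = s"
  using assms by (intro nth_equalityI) (auto simp: map_of_zip_nth)

lemma rep:
  assumes "S \<subseteq> {s. length s = length fs}" "distinct fs"
  shows "S = vset {v. map v fs \<in> S} fs"
proof
  show "S \<subseteq> vset {v. map v fs \<in> S} fs"
  proof
    fix s assume s: "s \<in> S"
    hence "length s = length fs" using assms by auto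
    hence "map (\<lambda>x. the (map_of (zip fs s) x)) fs = s" using map_of_zip_map assms by blast
    thus "s \<in> vset {v. map v fs \<in> S} fs" using s unfolding vset_def
      by (intro CollectI exI[of _ "\<lambda>x. the (map_of (zip fs s) x)"]) simp
  qed
qed (auto simp: vset_def)

fun subs :: "('a,'b,'u) form \<Rightarrow> ('a,'b,'u) form set" where
  "subs (Atom p) = {Atom p}"
| "subs (Bin a b c) = insert (Bin a b c) (subs a \<union> subs c)"
| "subs (UnOp u a) = insert (UnOp u a) (subs a)"

lemma subs_finite: "finite (subs x)" by (induction x) auto
lemma subs_self: "x \<in> subs x" by (cases x) auto
lemma subs_trans: "y \<in> subs x \<Longrightarrow> subs y \<subseteq> subs x" by (induction x) auto

lemma map_eq_sub: "set fs \<subseteq> set L \<Longrightarrow> map v L = map w L \<Longrightarrow> map v fs = map w fs"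
  by (simp add: map_eq_conv subset_iff)

context fixes fb :: "'b \<Rightarrow> real \<Rightarrow> real \<Rightarrow> real" and fu :: "'u \<Rightarrow> real \<Rightarrow> real" and \<Gamma> :: "('a,'b,'u) sentence set" begin

lemma reorder:
  assumes d: "derivable fb fu \<Gamma> (fs, vset P fs)" and df: "distinct fs" and dy: "distinct ys"
    and st: "set ys = set fs"
  shows "derivable fb fu \<Gamma> (ys, vset P ys)"
proof -
  have len: "length ys = length fs" using df dy st by (metis distinct_card)
  let ?n = "length fs"
  define idx where "idx = inv_into {..<?n} ((!) fs)"
  define \<pi> where "\<pi> = idx \<circ> ((!) ys)"
  have b1: "bij_betw ((!) fs) {..<?n} (set fs)" by (rule bij_betw_nth[OF df]) auto
  have b2: "bij_betw ((!) ys) {..<?n} (set fs)" by (rule bij_betw_nth[OF dy]) (auto simp: len st)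
  have bij: "bij_betw \<pi> {..<?n} {..<?n}" unfolding \<pi>_def idx_def
    using bij_betw_trans[OF b2 bij_betw_inv_into[OF b1]] .
  have fp: "fs ! \<pi> i = ys ! i" if "i < ?n" for i
  proof -
    have "ys ! i \<in> set fs" using that len st by (metis nth_mem)
    hence "ys ! i \<in> (!) fs ` {..<?n}" using b1 by (simp add: bij_betw_def)
    thus ?thesis unfolding \<pi>_def idx_def by (simp add: f_inv_into_f)
  qed
  have pl: "\<pi> i < ?n" if "i < ?n" for i using bij that by (auto simp: bij_betw_def)
  have e1: "map (\<lambda>i. fs ! \<pi> i) [0..<?n] = ys"
    by (rule nth_equalityI) (auto simp: len fp)
  have e2: "(\<lambda>s. map (\<lambda>i. s ! \<pi> i) [0..<?n]) ` vset P fs = vset P ys"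
  proof -
    have "map (\<lambda>i. map v fs ! \<pi> i) [0..<?n] = map v ys" for v
      by (rule nth_equalityI) (auto simp: len fp pl)
    thus ?thesis unfolding vset_def by (auto simp: image_iff) metis
  qed
  show ?thesis using derivable.r1[OF d bij] e1 e2 by simp
qed

definition dep :: "'f list \<Rightarrow> ('f \<Rightarrow> real) set \<Rightarrow> bool" where
  "dep fs P \<longleftrightarrow> (\<forall>v w. map v fs = map w fs \<longrightarrow> (v \<in> P \<longleftrightarrow> w \<in> P))"

lemma extend:
  assumes d: "derivable fb fu \<Gamma> (fs, vset P fs)" and dis: "distinct (fs @ gs)" and dp: "dep fs P"
  shows "derivable fb fu \<Gamma> (fs @ gs, vset {v. v \<in> P \<and> (\<forall>g\<in>set gs. v g \<in> {0..1})} (fs @ gs))"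
proof -
  have "{s @ t | s t. s \<in> vset P fs \<and> t \<in> unit_cube (length gs)}
        = vset {v. v \<in> P \<and> (\<forall>g\<in>set gs. v g \<in> {0..1})} (fs @ gs)"
  proof
    show "{s @ t | s t. s \<in> vset P fs \<and> t \<in> unit_cube (length gs)}
        \<subseteq> vset {v. v \<in> P \<and> (\<forall>g\<in>set gs. v g \<in> {0..1})} (fs @ gs)"
    proof
      fix x assume "x \<in> {s @ t | s t. s \<in> vset P fs \<and> t \<in> unit_cube (length gs)}"
      then obtain w t where x: "x = map w fs @ t" and w: "w \<in> P" and t: "length t = length gs" "set t \<subseteq> {0..1}"
        by (auto simp: vset_def unit_cube_def)
      define v where "v = (\<lambda>y. if y \<in> set fs then w y else the (map_of (zip gs t) y))"
      have m1: "map v fs = map w fs" by (simp add: v_def)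
      have "map v gs = map (\<lambda>y. the (map_of (zip gs t) y)) gs" using dis by (auto simp: v_def)
      also have "\<dots> = t" using map_of_zip_map dis t by auto
      finally have m2: "map v gs = t" .
      have "v \<in> P" using dp m1 w unfolding dep_def by blast
      moreover have "\<forall>g\<in>set gs. v g \<in> {0..1}" using m2 t(2) by (metis image_eqI list.set_map subsetD)
      ultimately show "x \<in> vset {v. v \<in> P \<and> (\<forall>g\<in>set gs. v g \<in> {0..1})} (fs @ gs)"
        unfolding vset_def using x m1 m2 by (intro CollectI exI[of _ v]) auto
    qed
  next
    show "vset {v. v \<in> P \<and> (\<forall>g\<in>set gs. v g \<in> {0..1})} (fs @ gs)
       \<subseteq> {s @ t | s t. s \<in> vset P fs \<and> t \<in> unit_cube (length gs)}"
    proof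
      fix x assume "x \<in> vset {v. v \<in> P \<and> (\<forall>g\<in>set gs. v g \<in> {0..1})} (fs @ gs)"
      then obtain v where x: "x = map v (fs @ gs)" and vP: "v \<in> P" and r: "\<forall>g\<in>set gs. v g \<in> {0..1}"
        unfolding vset_def by auto
      have "map v fs \<in> vset P fs" using vP unfolding vset_def by auto
      moreover have "map v gs \<in> unit_cube (length gs)" using r unfolding unit_cube_def by auto
      ultimately show "x \<in> {s @ t | s t. s \<in> vset P fs \<and> t \<in> unit_cube (length gs)}"
        using x by auto
    qed
  qed
  thus ?thesis using derivable.r2[OF d dis] by simp
qed

lemma project:
  assumes d: "derivable fb fu \<Gamma> (fs @ gs, vset P (fs @ gs))" and "fs \<noteq> []" "gs \<noteq> []"
  shows "derivable fb fu \<Gamma> (fs, vset P fs)"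
proof -
  have "0 < length gs" "length gs < length (fs @ gs)" using assms by auto
  from derivable.r4[OF d this] have "derivable fb fu \<Gamma> (fs, take (length fs) ` vset P (fs @ gs))" by simp
  moreover have "take (length fs) ` vset P (fs @ gs) = vset P fs"
  proof
    show "take (length fs) ` vset P (fs @ gs) \<subseteq> vset P fs" unfolding vset_def by auto
    show "vset P fs \<subseteq> take (length fs) ` vset P (fs @ gs)"
    proof
      fix x assume "x \<in> vset P fs"
      then obtain v where "x = map v fs" "v \<in> P" unfolding vset_def by auto
      thus "x \<in> take (length fs) ` vset P (fs @ gs)" unfolding vset_def
        by (intro image_eqI[of _ _ "map v (fs @ gs)"]) auto
    qed
  qed
  ultimately show ?thesis by simp
qed

lemma intersect:
  assumes "derivable fb fu \<Gamma> (fs, vset P fs)" "derivable fb fu \<Gamma> (fs, vset Q fs)" "dep fs P" "dep fs Q"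
  shows "derivable fb fu \<Gamma> (fs, vset (P \<inter> Q) fs)"
proof -
  have "vset P fs \<inter> vset Q fs = vset (P \<inter> Q) fs"
  proof
    show "vset (P \<inter> Q) fs \<subseteq> vset P fs \<inter> vset Q fs" unfolding vset_def by auto
    show "vset P fs \<inter> vset Q fs \<subseteq> vset (P \<inter> Q) fs"
    proof
      fix x assume "x \<in> vset P fs \<inter> vset Q fs"
      then obtain v w where "x = map v fs" "v \<in> P" "x = map w fs" "w \<in> Q" unfolding vset_def by blast
      moreover have "v \<in> Q" using calculation assms(4) unfolding dep_def by metis
      ultimately show "x \<in> vset (P \<inter> Q) fs" unfolding vset_def by auto
    qed
  qed
  thus ?thesis using derivable.r3[OF assms(1,2)] by simp
qed

definition subclosed :: "('a,'b,'u) form set \<Rightarrow> bool" where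
  "subclosed F \<longleftrightarrow> (\<forall>a b c. Bin a b c \<in> F \<longrightarrow> a \<in> F \<and> c \<in> F) \<and> (\<forall>u a. UnOp u a \<in> F \<longrightarrow> a \<in> F)"

lemma subclosedD1: "subclosed F \<Longrightarrow> Bin a b c \<in> F \<Longrightarrow> a \<in> F"
  and subclosedD2: "subclosed F \<Longrightarrow> Bin a b c \<in> F \<Longrightarrow> c \<in> F"
  and subclosedD3: "subclosed F \<Longrightarrow> UnOp u a \<in> F \<Longrightarrow> a \<in> F"
  unfolding subclosed_def by blast+

definition vcons :: "('a,'b,'u) form set \<Rightarrow> (('a,'b,'u) form \<Rightarrow> real) set" where
  "vcons F = {v. (\<forall>a b c. Bin a b c \<in> F \<longrightarrow> fb b (v a) (v c) = v (Bin a b c)) \<and>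
                (\<forall>u a. UnOp u a \<in> F \<longrightarrow> fu u (v a) = v (UnOp u a))}"

lemma filt:
  assumes d: "derivable fb fu \<Gamma> (L, vset P L)" and dis: "distinct L" and cl: "subclosed (set L)"
  shows "derivable fb fu \<Gamma> (L, vset (P \<inter> vcons (set L)) L)"
proof -
  have "r6_filter fb fu L (vset P L) = vset (P \<inter> vcons (set L)) L"
  proof
    show "r6_filter fb fu L (vset P L) \<subseteq> vset (P \<inter> vcons (set L)) L"
    proof
      fix s assume s: "s \<in> r6_filter fb fu L (vset P L)"
      have all: "s \<in> vset P L \<and> (\<forall>i<length L. \<forall>j<length L. \<forall>m<length L. \<forall>b.
          L ! m = Bin (L ! i) b (L ! j) \<longrightarrow> fb b (s ! i) (s ! j) = s ! m) \<and>
          (\<forall>i<length L. \<forall>j<length L. \<forall>u.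
          L ! j = UnOp u (L ! i) \<longrightarrow> fu u (s ! i) = s ! j)"
        using s unfolding r6_filter_def mem_Collect_eq .
      note sP = conjunct1[OF all]
      note c1 = conjunct1[OF conjunct2[OF all]]
      note c2 = conjunct2[OF conjunct2[OF all]]
      from sP obtain v where sv: "s = map v L" and vP: "v \<in> P" unfolding vset_def by blast
      have "v \<in> vcons (set L)" unfolding vcons_def
      proof (intro CollectI conjI allI impI)
        fix a b c assume h: "Bin a b c \<in> set L"
        have "a \<in> set L" "c \<in> set L" using subclosedD1[OF cl h] subclosedD2[OF cl h] .
        then obtain i j where ij0: "i < length L" "L ! i = a" "j < length L" "L ! j = c"
          by (auto simp: in_set_conv_nth)
        obtain m where m: "m < length L" "L ! m = Bin a b c" using h by (auto simp: in_set_conv_nth)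
        note ij = ij0 m
        have "L ! m = Bin (L ! i) b (L ! j)" using ij by simp
        from c1[rule_format, OF ij(1) ij(3) ij(5) this] have "fb b (s ! i) (s ! j) = s ! m" .
        thus "fb b (v a) (v c) = v (Bin a b c)" using ij sv by simp
      next
        fix u a assume h: "UnOp u a \<in> set L"
        have "a \<in> set L" using subclosedD3[OF cl h] .
        then obtain i where ij0: "i < length L" "L ! i = a" by (auto simp: in_set_conv_nth)
        obtain j where j: "j < length L" "L ! j = UnOp u a" using h by (auto simp: in_set_conv_nth)
        note ij = ij0 j
        have "L ! j = UnOp u (L ! i)" using ij by simp
        from c2[rule_format, OF ij(1) ij(3) this] have "fu u (s ! i) = s ! j" .
        thus "fu u (v a) = v (UnOp u a)" using ij sv by simp
      qed
      thus "s \<in> vset (P \<inter> vcons (set L)) L" using sv vP unfolding vset_def by auto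
    qed
  next
    show "vset (P \<inter> vcons (set L)) L \<subseteq> r6_filter fb fu L (vset P L)"
    proof
      fix s assume "s \<in> vset (P \<inter> vcons (set L)) L"
      then obtain v where sv: "s = map v L" and vP: "v \<in> P" and vc: "v \<in> vcons (set L)" unfolding vset_def by auto
      show "s \<in> r6_filter fb fu L (vset P L)" unfolding r6_filter_def
      proof (intro CollectI conjI allI impI)
        show "s \<in> vset P L" using sv vP unfolding vset_def by auto
      next
        fix i j m b assume "i < length L" "j < length L" "m < length L" and e: "L ! m = Bin (L ! i) b (L ! j)"
        moreover have "Bin (L ! i) b (L ! j) \<in> set L" using calculation by (metis nth_mem)
        ultimately show "fb b (s ! i) (s ! j) = s ! m" using vc sv unfolding vcons_def by simp
      next
        fix i j u assume "i < length L" "j < length L" and e: "L ! j = UnOp u (L ! i)"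
        moreover have "UnOp u (L ! i) \<in> set L" using calculation by (metis nth_mem)
        ultimately show "fu u (s ! i) = s ! j" using vc sv unfolding vcons_def by simp
      qed
    qed
  qed
  thus ?thesis using derivable.r6[OF d] by simp
qed

lemma weaken:
  assumes "derivable fb fu \<Gamma> (fs, vset P fs)" "vset P fs \<subseteq> S'" "S' \<subseteq> unit_cube (length fs)"
  shows "derivable fb fu \<Gamma> (fs, S')"
  using derivable.r5[OF assms] .

lemma vconsD1: "v \<in> vcons F \<Longrightarrow> Bin a b c \<in> F \<Longrightarrow> v (Bin a b c) = fb b (v a) (v c)"
  and vconsD2: "v \<in> vcons F \<Longrightarrow> UnOp u a \<in> F \<Longrightarrow> v (UnOp u a) = fu u (v a)"
  unfolding vcons_def by auto

lemma model_eval: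
  assumes cl: "subclosed F" and vc: "v \<in> vcons F"
  shows "x \<in> F \<Longrightarrow> eval fb fu (\<lambda>p. if Atom p \<in> F then v (Atom p) else 0) x = v x"
proof (induction x)
  case (Atom p) thus ?case by simp
next
  case (Bin a b c)
  have "a \<in> F" "c \<in> F" using subclosedD1[OF cl Bin.prems] subclosedD2[OF cl Bin.prems] .
  thus ?case using Bin.IH vconsD1[OF vc Bin.prems] by simp
next
  case (UnOp u a)
  have "a \<in> F" using subclosedD3[OF cl UnOp.prems] .
  thus ?case using UnOp.IH vconsD2[OF vc UnOp.prems] by simp
qed

lemma model_ok:
  assumes "\<forall>x\<in>F. v x \<in> {0..1}"
  shows "is_model (\<lambda>p. if Atom p \<in> F then v (Atom p) else 0)"
  using assms unfolding is_model_def by auto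

lemma eval_range:
  assumes fbr: "\<And>b x y. x \<in> {0..1} \<Longrightarrow> y \<in> {0..1} \<Longrightarrow> fb b x y \<in> {0..1}"
    and fur: "\<And>u x. x \<in> {0..1} \<Longrightarrow> fu u x \<in> {0..1}" and M: "is_model M"
  shows "eval fb fu M x \<in> {0..1}"
proof (induction x)
  case (Atom p) thus ?case using M unfolding is_model_def by simp
next
  case (Bin a b c) thus ?case using fbr by simp
next
  case (UnOp u a) thus ?case using fur by simp
qed

lemma sound:
  assumes d: "derivable fb fu \<Gamma> g"
    and fbr: "\<And>b x y. x \<in> {0..1} \<Longrightarrow> y \<in> {0..1} \<Longrightarrow> fb b x y \<in> {0..1}"
    and fur: "\<And>u x. x \<in> {0..1} \<Longrightarrow> fu u x \<in> {0..1}" and M: "is_model M"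
    and G: "\<forall>h\<in>\<Gamma>. sat fb fu M h"
  shows "sat fb fu M g"
  using d
proof (induction rule: derivable.induct)
  case (hyp g) thus ?case using G by blast
next
  case (ax \<sigma>)
  show ?case unfolding sat_def unit_cube_def using eval_range[OF fbr fur M, of \<sigma>] by simp
next
  case (r1 fs S \<pi>)
  let ?n = "length fs"
  have pl: "\<pi> i < ?n" if "i < ?n" for i using r1.hyps(2) that by (auto simp: bij_betw_def)
  have s: "map (eval fb fu M) fs \<in> S" using r1.IH unfolding sat_def by simp
  have "map (eval fb fu M) (map (\<lambda>i. fs ! \<pi> i) [0..<?n]) = map (\<lambda>i. map (eval fb fu M) fs ! \<pi> i) [0..<?n]"
    by (rule nth_equalityI) (auto simp: pl)
  thus ?case using s unfolding sat_def by auto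
next
  case (r2 fs S gs)
  have s: "map (eval fb fu M) fs \<in> S" using r2.IH unfolding sat_def by simp
  have "map (eval fb fu M) gs \<in> unit_cube (length gs)" unfolding unit_cube_def
    using eval_range[OF fbr fur M] by auto
  thus ?case using s unfolding sat_def by auto
next
  case (r3 fs S1 S2) thus ?case unfolding sat_def by simp
next
  case (r4 fs S r)
  hence "map (eval fb fu M) fs \<in> S" unfolding sat_def by simp
  hence "take (length fs - r) (map (eval fb fu M) fs) \<in> take (length fs - r) ` S" by blast
  thus ?case unfolding sat_def by (simp add: take_map)
next
  case (r5 fs S S') thus ?case unfolding sat_def by auto
next
  case (r6 fs S)
  let ?s = "map (eval fb fu M) fs"
  have s: "?s \<in> S" using r6.IH unfolding sat_def by simp
  show ?case unfolding sat_def r6_filter_def fst_conv snd_conv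
  proof (intro CollectI conjI allI impI)
    show "?s \<in> S" by (rule s)
  next
    fix i j m b assume "i < length fs" "j < length fs" "m < length fs" "fs ! m = Bin (fs ! i) b (fs ! j)"
    thus "fb b (?s ! i) (?s ! j) = ?s ! m" by simp
  next
    fix i j u assume "i < length fs" "j < length fs" "fs ! j = UnOp u (fs ! i)"
    thus "fu u (?s ! i) = ?s ! j" by simp
  qed
qed

lemma complete:
  assumes fin: "finite \<Gamma>" and wfG: "\<forall>g\<in>\<Gamma>. wf_sentence g" and wfg: "wf_sentence \<gamma>"
    and ent: "entails fb fu \<Gamma> \<gamma>"
  shows "derivable fb fu \<Gamma> \<gamma>"
proof -
  define F where "F = (\<Union>g\<in>insert \<gamma> \<Gamma>. \<Union>x\<in>set (fst g). subs x)"
  have "finite F" unfolding F_def using fin subs_finite by auto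
  then obtain L where L: "set L = F" "distinct L" using finite_distinct_list by blast
  have cl: "subclosed (set L)" unfolding subclosed_def L(1) F_def
  proof (intro conjI allI impI)
    fix a b c assume "Bin a b c \<in> (\<Union>g\<in>insert \<gamma> \<Gamma>. \<Union>x\<in>set (fst g). subs x)"
    then obtain g x where gx: "g \<in> insert \<gamma> \<Gamma>" "x \<in> set (fst g)" "Bin a b c \<in> subs x" by blast
    have "a \<in> subs x" "c \<in> subs x" using subs_trans[OF gx(3)] subs_self by auto
    thus "a \<in> (\<Union>g\<in>insert \<gamma> \<Gamma>. \<Union>x\<in>set (fst g). subs x)" "c \<in> (\<Union>g\<in>insert \<gamma> \<Gamma>. \<Union>x\<in>set (fst g). subs x)"
      using gx by blast+
  next
    fix u a assume "UnOp u a \<in> (\<Union>g\<in>insert \<gamma> \<Gamma>. \<Union>x\<in>set (fst g). subs x)"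
    then obtain g x where gx: "g \<in> insert \<gamma> \<Gamma>" "x \<in> set (fst g)" "UnOp u a \<in> subs x" by blast
    have "a \<in> subs x" using subs_trans[OF gx(3)] subs_self by auto
    thus "a \<in> (\<Union>g\<in>insert \<gamma> \<Gamma>. \<Union>x\<in>set (fst g). subs x)" using gx by blast
  qed
  have subL: "set (fst g) \<subseteq> set L" if "g \<in> insert \<gamma> \<Gamma>" for g
    unfolding L(1) F_def using that subs_self by blast
  define Q where "Q G = {v. (\<forall>h\<in>G. map v (fst h) \<in> snd h) \<and> (\<forall>x\<in>set L. v x \<in> {0..1})}"
    for G :: "('a,'b,'u) sentence set"
  have depQ: "dep L (Q G)" if "G \<subseteq> \<Gamma>" for G
    unfolding dep_def Q_def
  proof (intro allI impI)
    fix v w :: "('a,'b,'u) form \<Rightarrow> real" assume e: "map v L = map w L"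
    have "map v (fst h) = map w (fst h)" if "h \<in> G" for h
      using map_eq_sub[OF subL e] that \<open>G \<subseteq> \<Gamma>\<close> by blast
    moreover have "\<forall>x\<in>set L. v x = w x" using e by (simp add: map_eq_conv)
    ultimately show "v \<in> {v. (\<forall>h\<in>G. map v (fst h) \<in> snd h) \<and> (\<forall>x\<in>set L. v x \<in> {0..1})} \<longleftrightarrow>
                     w \<in> {v. (\<forall>h\<in>G. map v (fst h) \<in> snd h) \<and> (\<forall>x\<in>set L. v x \<in> {0..1})}"
      by (simp del: map_eq_conv)
  qed
  have fg: "fst \<gamma> \<noteq> []" "distinct (fst \<gamma>)" "snd \<gamma> \<subseteq> unit_cube (length (fst \<gamma>))"
    using wfg unfolding wf_sentence_def by auto
  have "L \<noteq> []" using subL[of \<gamma>] fg(1) by auto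
  then obtain \<sigma> rest where Lc: "L = \<sigma> # rest" by (cases L) auto
  have main: "derivable fb fu \<Gamma> (L, vset (Q G) L)" if "G \<subseteq> \<Gamma>" for G
  proof -
    have "finite G" using that fin finite_subset by blast
    thus ?thesis using that
    proof (induction G rule: finite_induct)
      case empty
      have uc: "unit_cube 1 = vset {v. v \<sigma> \<in> {0..1}} [\<sigma>]"
      proof
        show "unit_cube 1 \<subseteq> vset {v. v \<sigma> \<in> {0..1}} [\<sigma>]"
        proof
          fix s assume "s \<in> unit_cube 1"
          then obtain x where "s = [x]" "x \<in> {0..1}" unfolding unit_cube_def
            by (cases s) auto
          thus "s \<in> vset {v. v \<sigma> \<in> {0..1}} [\<sigma>]" unfolding vset_def
            by (intro CollectI exI[of _ "\<lambda>_. x"]) auto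
        qed
        show "vset {v. v \<sigma> \<in> {0..1}} [\<sigma>] \<subseteq> unit_cube 1" unfolding vset_def unit_cube_def by auto
      qed
      have d0: "derivable fb fu \<Gamma> ([\<sigma>], vset {v. v \<sigma> \<in> {0..1}} [\<sigma>])"
        using derivable.ax[of fb fu \<Gamma> \<sigma>] uc by simp
      have dis: "distinct ([\<sigma>] @ rest)" using L(2) Lc by simp
      have "dep [\<sigma>] {v. v \<sigma> \<in> {0..1}}" unfolding dep_def by auto
      from extend[OF d0 dis this]
      have "derivable fb fu \<Gamma> ([\<sigma>] @ rest, vset {v. v \<in> {v. v \<sigma> \<in> {0..1}} \<and> (\<forall>g\<in>set rest. v g \<in> {0..1})} ([\<sigma>] @ rest))" .
      moreover have "{v. v \<in> {v. v \<sigma> \<in> {0..1}} \<and> (\<forall>g\<in>set rest. v g \<in> {0..1})} = Q {}"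
        unfolding Q_def Lc by auto
      ultimately show ?case using Lc by simp
    next
      case (insert g G)
      have gG: "g \<in> \<Gamma>" "G \<subseteq> \<Gamma>" using insert.prems by auto
      have IH: "derivable fb fu \<Gamma> (L, vset (Q G) L)" using insert.IH gG(2) .
      have wg: "fst g \<noteq> []" "distinct (fst g)" "snd g \<subseteq> unit_cube (length (fst g))"
        using wfG gG(1) unfolding wf_sentence_def by auto
      have "snd g \<subseteq> {s. length s = length (fst g)}" using wg(3) unfolding unit_cube_def by auto
      from rep[OF this wg(2)]
      have "snd g = vset {v. map v (fst g) \<in> snd g} (fst g)" .
      hence d0: "derivable fb fu \<Gamma> (fst g, vset {v. map v (fst g) \<in> snd g} (fst g))"
        using derivable.hyp[OF gG(1)] by (metis prod.collapse)
      define rs where "rs = filter (\<lambda>x. x \<notin> set (fst g)) L"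
      have dis: "distinct (fst g @ rs)" unfolding rs_def using wg(2) L(2) by auto
      have "dep (fst g) {v. map v (fst g) \<in> snd g}" unfolding dep_def by (auto simp del: map_eq_conv)
      from extend[OF d0 dis this]
      have d1: "derivable fb fu \<Gamma> (fst g @ rs, vset {v. v \<in> {v. map v (fst g) \<in> snd g} \<and> (\<forall>x\<in>set rs. v x \<in> {0..1})} (fst g @ rs))" .
      have st: "set L = set (fst g @ rs)" unfolding rs_def using subL[of g] gG(1) by auto
      define E where "E = {v. v \<in> {v. map v (fst g) \<in> snd g} \<and> (\<forall>x\<in>set rs. v x \<in> {0..1})}"
      have d2: "derivable fb fu \<Gamma> (L, vset E L)"
        using reorder[OF d1[folded E_def] dis L(2) st] .
      have depE: "dep L E" unfolding dep_def E_def
      proof (intro allI impI)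
        fix v w :: "('a,'b,'u) form \<Rightarrow> real" assume e: "map v L = map w L"
        have "map v (fst g) = map w (fst g)" using map_eq_sub[OF subL e] gG(1) by blast
        moreover have "\<forall>x\<in>set L. v x = w x" using e by (simp add: map_eq_conv)
        moreover have "set rs \<subseteq> set L" unfolding rs_def by auto
        hence "\<forall>x\<in>set rs. v x = w x" using e by (auto simp: map_eq_conv)
        ultimately show "v \<in> {v. v \<in> {v. map v (fst g) \<in> snd g} \<and> (\<forall>x\<in>set rs. v x \<in> {0..1})} \<longleftrightarrow>
                         w \<in> {v. v \<in> {v. map v (fst g) \<in> snd g} \<and> (\<forall>x\<in>set rs. v x \<in> {0..1})}"
          by (simp del: map_eq_conv)
      qed
      have "derivable fb fu \<Gamma> (L, vset (E \<inter> Q G) L)" using intersect[OF d2 IH depE depQ[OF gG(2)]] .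
      moreover have "E \<inter> Q G = Q (insert g G)" unfolding E_def Q_def rs_def by auto
      ultimately show ?case by simp
    qed
  qed
  have dG: "derivable fb fu \<Gamma> (L, vset (Q \<Gamma> \<inter> vcons (set L)) L)"
    using filt[OF main[OF order_refl] L(2) cl] .
  define R where "R = Q \<Gamma> \<inter> vcons (set L)"
  define rs where "rs = filter (\<lambda>x. x \<notin> set (fst \<gamma>)) L"
  have dis: "distinct (fst \<gamma> @ rs)" unfolding rs_def using fg(2) L(2) by auto
  have st: "set (fst \<gamma> @ rs) = set L" unfolding rs_def using subL[of \<gamma>] by auto
  have d3: "derivable fb fu \<Gamma> (fst \<gamma> @ rs, vset R (fst \<gamma> @ rs))"
    using reorder[OF dG[folded R_def] L(2) dis st] .
  have d4: "derivable fb fu \<Gamma> (fst \<gamma>, vset R (fst \<gamma>))"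
  proof (cases "rs = []")
    case True thus ?thesis using d3 by simp
  next
    case False thus ?thesis using project[OF d3 fg(1)] by simp
  qed
  have sub: "vset R (fst \<gamma>) \<subseteq> snd \<gamma>"
  proof
    fix s assume "s \<in> vset R (fst \<gamma>)"
    then obtain v where sv: "s = map v (fst \<gamma>)" and vQ: "v \<in> Q \<Gamma>" and vc: "v \<in> vcons (set L)"
      unfolding vset_def R_def by blast
    define M where "M = (\<lambda>p. if Atom p \<in> set L then v (Atom p) else 0)"
    have rng: "\<forall>x\<in>set L. v x \<in> {0..1}" using vQ unfolding Q_def by blast
    have M: "is_model M" unfolding M_def using model_ok[OF rng] .
    have ev: "eval fb fu M x = v x" if "x \<in> set L" for x
      unfolding M_def using model_eval[OF cl vc that] .
    have evl: "map (eval fb fu M) (fst g) = map v (fst g)" if "g \<in> insert \<gamma> \<Gamma>" for g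
      using subL[OF that] ev by (auto simp: map_eq_conv)
    have "\<forall>h\<in>\<Gamma>. sat fb fu M h"
    proof
      fix h assume h: "h \<in> \<Gamma>"
      have "map v (fst h) \<in> snd h" using vQ h unfolding Q_def by blast
      moreover have "map (eval fb fu M) (fst h) = map v (fst h)" using evl h by blast
      ultimately show "sat fb fu M h" unfolding sat_def by (simp del: map_eq_conv)
    qed
    hence "sat fb fu M \<gamma>" using ent M unfolding entails_def by blast
    moreover have "map (eval fb fu M) (fst \<gamma>) = map v (fst \<gamma>)" using evl by blast
    ultimately show "s \<in> snd \<gamma>" unfolding sat_def using sv by (simp del: map_eq_conv)
  qed
  have "derivable fb fu \<Gamma> (fst \<gamma>, snd \<gamma>)" using weaken[OF d4 sub fg(3)] .
  thus ?thesis by simp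
qed

end

theorem theorem2:
  fixes fb :: "'b::finite \<Rightarrow> real \<Rightarrow> real \<Rightarrow> real"
    and fu :: "'u::finite \<Rightarrow> real \<Rightarrow> real"
    and \<Gamma> :: "('a::finite, 'b, 'u) sentence set"
    and \<gamma> :: "('a, 'b, 'u) sentence"
  assumes "\<And>b x y. x \<in> {0..1} \<Longrightarrow> y \<in> {0..1} \<Longrightarrow> fb b x y \<in> {0..1}"
    and "\<And>u x. x \<in> {0..1} \<Longrightarrow> fu u x \<in> {0..1}"
    and "finite \<Gamma>"
    and "\<forall>g\<in>\<Gamma>. wf_sentence g"
    and "wf_sentence \<gamma>"
  shows "derivable fb fu \<Gamma> \<gamma> \<longleftrightarrow> entails fb fu \<Gamma> \<gamma>"
proof
  assume "derivable fb fu \<Gamma> \<gamma>"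
  thus "entails fb fu \<Gamma> \<gamma>" unfolding entails_def
    using sound[where fb=fb and fu=fu and \<Gamma>=\<Gamma>, OF _ assms(1,2)] by blast
next
  assume "entails fb fu \<Gamma> \<gamma>"
  thus "derivable fb fu \<Gamma> \<gamma>" using complete[OF assms(3,4,5)] by blast
qed

end
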